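(* Let $\Gamma_3^*\subseteq\mathbb{R}^7$ be the set of entropy vectors of triples of discrete random variables. Let $\mathbf{e}_1=[1,0,0,1,1,0,1]^\intercal$, $\mathbf{e}_2=[0,1,0,1,0,1,1]^\intercal$, $\mathbf{e}_3=[0,0,1,0,1,1,1]^\intercal$, $\mathbf{e}_{12}=[1,1,0,1,1,1,1]^\intercal$, $\mathbf{e}_{123'}=[1,1,1,2,2,2,2]^\intercal$, and $\Omega=\mathrm{cone}(\mathbf{e}_1,\mathbf{e}_2,\mathbf{e}_3,\mathbf{e}_{12},\mathbf{e}_{123'})$. Let $\Omega^{\mathrm{in}}$ be the set of all vectors $\lambda_1\mathbf{e}_1+\lambda_2\mathbf{e}_2+\lambda_3\mathbf{e}_3+\lambda_{12}\mathbf{e}_{12}+\lambda_{123'}\mathbf{e}_{123'}$ with all $\lambda_j\ge 0$ such that at least one of the following holds: (i) $\lambda_{12}+\lambda_{123'}\ge\log\lceil 2^{\lambda_{123'}}\rceil$; (ii) $\lambda_{123'}=\log m$ for some $m\in\mathbb{N}$. Then $\Omega^{\mathrm{in}}\subseteq\Omega\cap\Gamma_3^*$.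
   Context: All logarithms are base 2 and entropies are in bits. For a discrete random vector $(X_1,X_2,X_3)$, its entropy vector is $[h_1,h_2,h_3,h_{12},h_{13},h_{23},h_{123}]^\intercal\in\mathbb{R}^7$, where $h_\alpha$ is the Shannon entropy of $(X_i)_{i\in\alpha}$. *)

theory Defs
  imports "HOL-Analysis.Analysis" "HOL-Probability.Probability_Mass_Function"
begin

definition shannon_entropy :: "'a pmf \<Rightarrow> real" where
  "shannon_entropy p = (\<Sum>x\<in>set_pmf p. - pmf p x * log 2 (pmf p x))"

definition entropy_vector :: "('a \<times> 'b \<times> 'c) pmf \<Rightarrow> real ^ 7" where
  "entropy_vector p = vector
     [ shannon_entropy (map_pmf (\<lambda>(x,y,z). x) p),
       shannon_entropy (map_pmf (\<lambda>(x,y,z). y) p),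
       shannon_entropy (map_pmf (\<lambda>(x,y,z). z) p),
       shannon_entropy (map_pmf (\<lambda>(x,y,z). (x,y)) p),
       shannon_entropy (map_pmf (\<lambda>(x,y,z). (x,z)) p),
       shannon_entropy (map_pmf (\<lambda>(x,y,z). (y,z)) p),
       shannon_entropy p ]"

definition Gamma3_star :: "(real ^ 7) set" where
  "Gamma3_star = {entropy_vector p | p :: (nat \<times> nat \<times> nat) pmf. finite (set_pmf p)}"

definition e1 :: "real ^ 7" where "e1 = vector [1,0,0,1,1,0,1]"
definition e2 :: "real ^ 7" where "e2 = vector [0,1,0,1,0,1,1]"
definition e3 :: "real ^ 7" where "e3 = vector [0,0,1,0,1,1,1]"
definition e12 :: "real ^ 7" where "e12 = vector [1,1,0,1,1,1,1]"
definition e123' :: "real ^ 7" where "e123' = vector [1,1,1,2,2,2,2]"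

definition Omega :: "(real ^ 7) set" where
  "Omega = {l1 *\<^sub>R e1 + l2 *\<^sub>R e2 + l3 *\<^sub>R e3 + l12 *\<^sub>R e12 + l123 *\<^sub>R e123' |
              l1 l2 l3 l12 l123. l1 \<ge> 0 \<and> l2 \<ge> 0 \<and> l3 \<ge> 0 \<and> l12 \<ge> 0 \<and> l123 \<ge> 0}"

definition Omega_in :: "(real ^ 7) set" where
  "Omega_in = {l1 *\<^sub>R e1 + l2 *\<^sub>R e2 + l3 *\<^sub>R e3 + l12 *\<^sub>R e12 + l123 *\<^sub>R e123' |
              l1 l2 l3 l12 l123. l1 \<ge> 0 \<and> l2 \<ge> 0 \<and> l3 \<ge> 0 \<and> l12 \<ge> 0 \<and> l123 \<ge> 0 \<and>
              (l12 + l123 \<ge> log 2 (real_of_int \<lceil>2 powr l123\<rceil>) \<or>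
               (\<exists>m::nat. m \<ge> 1 \<and> l123 = log 2 (real m)))}"

end

theory Submission
  imports Defs
begin

lemma xlnx_lim: "((\<lambda>x::real. x * ln x) \<longlongrightarrow> 0) (at_right 0)"
proof -
  have "((\<lambda>x::real. ln (inverse x) / inverse x) \<longlongrightarrow> 0) (at_right 0)"
    using filterlim_compose[OF ln_x_over_x_tendsto_0 filterlim_inverse_at_top_right] by (simp add: o_def)
  then have "((\<lambda>x::real. - (ln (inverse x) / inverse x)) \<longlongrightarrow> - 0) (at_right 0)" by (rule tendsto_minus)
  moreover have "eventually (\<lambda>x::real. - (ln (inverse x) / inverse x) = x * ln x) (at_right 0)"
    using eventually_at_right_less[of "0::real"] by eventually_elim (simp add: ln_inverse divide_inverse)
  ultimately show ?thesis using tendsto_cong by fastforce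
qed

lemma eta_cont: "continuous_on {0..} (\<lambda>x::real. - x * log 2 x)"
proof -
  have "continuous_on {0..} (\<lambda>x::real. x * ln x)"
  proof (clarsimp simp: continuous_on_eq_continuous_within)
    fix x :: real assume "0 \<le> x"
    show "continuous (at x within {0..}) (\<lambda>x. x * ln x)"
    proof (cases "x = 0")
      case True
      then show ?thesis unfolding continuous_within using xlnx_lim
        by (simp add: at_within_Ici_at_right)
    next
      case False
      then have "continuous (at x) (\<lambda>x. x * ln x)" using \<open>0 \<le> x\<close>
        by (intro continuous_intros) auto
      then show ?thesis using continuous_at_imp_continuous_at_within by blast
    qed
  qed
  then have "continuous_on {0..} (\<lambda>x::real. (x * ln x) * (-1 / ln 2))"
    by (rule continuous_on_mult_right)
  moreover have "(\<lambda>x::real. (x * ln x) * (-1 / ln 2)) = (\<lambda>x::real. - x * log 2 x)"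
    by (auto simp: log_def)
  ultimately show ?thesis by metis
qed

lemma exhaust_7:
  fixes x :: 7
  shows "x = 1 \<or> x = 2 \<or> x = 3 \<or> x = 4 \<or> x = 5 \<or> x = 6 \<or> x = 7"
proof (induct x)
  case (of_int z)
  then have "z = 0 \<or> z = 1 \<or> z = 2 \<or> z = 3 \<or> z = 4 \<or> z = 5 \<or> z = 6" by fastforce
  then show ?case by (elim disjE) simp_all
qed

lemma vector_7 [simp]:
 "(vector [a1,a2,a3,a4,a5,a6,a7] ::('a::zero)^7)$1 = a1"
 "(vector [a1,a2,a3,a4,a5,a6,a7] ::('a::zero)^7)$2 = a2"
 "(vector [a1,a2,a3,a4,a5,a6,a7] ::('a::zero)^7)$3 = a3"
 "(vector [a1,a2,a3,a4,a5,a6,a7] ::('a::zero)^7)$4 = a4"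
 "(vector [a1,a2,a3,a4,a5,a6,a7] ::('a::zero)^7)$5 = a5"
 "(vector [a1,a2,a3,a4,a5,a6,a7] ::('a::zero)^7)$6 = a6"
 "(vector [a1,a2,a3,a4,a5,a6,a7] ::('a::zero)^7)$7 = a7"
  unfolding vector_def by simp_all

lemma vec7_eq: "(v::real^7) = w \<longleftrightarrow> v$1 = w$1 \<and> v$2 = w$2 \<and> v$3 = w$3 \<and> v$4 = w$4
   \<and> v$5 = w$5 \<and> v$6 = w$6 \<and> v$7 = w$7"
proof
  assume h: "v$1 = w$1 \<and> v$2 = w$2 \<and> v$3 = w$3 \<and> v$4 = w$4 \<and> v$5 = w$5 \<and> v$6 = w$6 \<and> v$7 = w$7"
  show "v = w" unfolding vec_eq_iff
  proof
    fix i :: 7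
    from exhaust_7[of i] h show "v$i = w$i" by (elim disjE) simp_all
  qed
qed simp

lemma H_sup:
  assumes "finite A" "set_pmf p \<subseteq> A"
  shows "shannon_entropy p = (\<Sum>x\<in>A. - pmf p x * log 2 (pmf p x))"
  unfolding shannon_entropy_def
  by (rule sum.mono_neutral_left) (use assms in \<open>auto simp: set_pmf_iff\<close>)

lemma H_inj:
  assumes "inj_on f (set_pmf p)"
  shows "shannon_entropy (map_pmf f p) = shannon_entropy p"
  unfolding shannon_entropy_def set_map_pmf
  using assms by (simp add: sum.reindex pmf_map_inj)

lemma H_return [simp]: "shannon_entropy (return_pmf x) = 0"
  unfolding shannon_entropy_def by simp

lemma H_pair:
  assumes fp: "finite (set_pmf p)" and fq: "finite (set_pmf q)"
  shows "shannon_entropy (pair_pmf p q) = shannon_entropy p + shannon_entropy q"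
proof -
  let ?P = "set_pmf p" and ?Q = "set_pmf q"
  define X where "X a = - pmf p a * log 2 (pmf p a)" for a
  define Y where "Y b = - pmf q b * log 2 (pmf q b)" for b
  have sq: "(\<Sum>b\<in>?Q. pmf q b) = 1" by (rule sum_pmf_eq_1) (auto simp: fq)
  have sp: "(\<Sum>a\<in>?P. pmf p a) = 1" by (rule sum_pmf_eq_1) (auto simp: fp)
  have "shannon_entropy (pair_pmf p q) =
     (\<Sum>(a,b)\<in>?P \<times> ?Q. - (pmf p a * pmf q b) * log 2 (pmf p a * pmf q b))"
    unfolding shannon_entropy_def set_pair_pmf by (intro sum.cong) (auto simp: pmf_pair)
  also have "\<dots> = (\<Sum>a\<in>?P. \<Sum>b\<in>?Q. X a * pmf q b + pmf p a * Y b)"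
    unfolding sum.cartesian_product[symmetric]
  proof (intro sum.cong refl)
    fix a b assume "a \<in> ?P" "b \<in> ?Q"
    then have "pmf p a > 0" "pmf q b > 0" by (auto simp: set_pmf_iff pmf_nonneg order.not_eq_order_implies_strict)
    then show "- (pmf p a * pmf q b) * log 2 (pmf p a * pmf q b) = X a * pmf q b + pmf p a * Y b"
      by (simp add: X_def Y_def log_mult algebra_simps)
  qed
  also have "\<dots> = (\<Sum>a\<in>?P. X a * (\<Sum>b\<in>?Q. pmf q b) + pmf p a * (\<Sum>b\<in>?Q. Y b))"
    by (simp only: sum.distrib sum_distrib_left)
  also have "\<dots> = (\<Sum>a\<in>?P. X a) + (\<Sum>a\<in>?P. pmf p a) * (\<Sum>b\<in>?Q. Y b)"
    by (simp only: sq sum.distrib sum_distrib_right mult_1_right)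
  finally show ?thesis using sp unfolding shannon_entropy_def X_def Y_def by simp
qed


lemma H_uniform:
  assumes "finite A" "A \<noteq> {}"
  shows "shannon_entropy (pmf_of_set A) = log 2 (card A)"
proof -
  have "shannon_entropy (pmf_of_set A) = (\<Sum>x\<in>A. - (1 / card A) * log 2 (1 / card A))"
    unfolding shannon_entropy_def using assms by (intro sum.cong) auto
  also have "\<dots> = log 2 (card A)"
    using assms by (simp add: log_divide card_gt_0_iff)
  finally show ?thesis .
qed

lemma H_exists:
  assumes n: "n \<ge> (1::nat)" and t: "0 \<le> t" "t \<le> log 2 n"
  shows "\<exists>p::nat pmf. set_pmf p \<subseteq> {..<n} \<and> shannon_entropy p = t"
proof -
  define P where "P s = bernoulli_pmf s \<bind> (\<lambda>b. if b then pmf_of_set {..<n} else return_pmf (0::nat))" for s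
  define q where "q s i = s * (if i < n then 1 / real n else 0) + (1 - s) * (if i = 0 then 1 else 0)" for s :: real and i :: nat
  have pmfP: "pmf (P s) i = q s i" if "s \<in> {0..1}" for s i
  proof -
    have ne: "{..<n} \<noteq> {}" using n by (auto simp: lessThan_empty_iff)
    show ?thesis using that n unfolding P_def q_def by (auto simp: pmf_bind indicator_def ne)
  qed
  have setP: "set_pmf (P s) \<subseteq> {..<n}" if "s \<in> {0..1}" for s
  proof
    fix x assume "x \<in> set_pmf (P s)"
    then have "q s x \<noteq> 0" using pmfP[OF that] by (simp add: set_pmf_iff)
    then show "x \<in> {..<n}" using n unfolding q_def by (auto split: if_splits)
  qed
  define g where "g s = (\<Sum>i<n. - q s i * log 2 (q s i))" for s
  have HP: "shannon_entropy (P s) = g s" if "s \<in> {0..1}" for s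
    using H_sup[OF _ setP[OF that]] pmfP[OF that] by (simp add: g_def)
  have qnn: "q s i \<ge> 0" if "s \<in> {0..1}" for s i
    using that by (auto simp: q_def)
  have "continuous_on {0..1} g"
    unfolding g_def
  proof (intro continuous_on_sum ballI)
    fix i assume "i \<in> {..<n}"
    have "continuous_on {0..1} (\<lambda>s. q s i)" unfolding q_def by (intro continuous_intros)
    moreover have "(\<lambda>s. q s i) ` {0..1} \<subseteq> {0..}" using qnn by auto
    ultimately show "continuous_on {0..1} (\<lambda>s. - q s i * log 2 (q s i))"
      using continuous_on_compose2[OF eta_cont] by blast
  qed
  moreover have "g 0 = 0"
  proof -
    have "g 0 = (\<Sum>i<n. 0)" unfolding g_def q_def by (intro sum.cong) auto
    then show ?thesis by simp
  qed
  moreover have "g 1 = log 2 n"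
  proof -
    have "g 1 = (\<Sum>i<n. - (1 / real n) * log 2 (1 / real n))" unfolding g_def q_def by (intro sum.cong) auto
    also have "\<dots> = log 2 n" using n by (simp add: log_divide)
    finally show ?thesis .
  qed
  ultimately obtain s where s: "0 \<le> s" "s \<le> 1" "g s = t"
    using IVT'[of g 0 t 1] t by auto
  then show ?thesis using HP[of s] setP[of s] by auto
qed



lemma mod_cancel_nat:
  fixes u q q' n :: nat
  assumes "q < n" "q' < n" "(u + q) mod n = (u + q') mod n"
  shows "q = q'"
proof -
  have "int ((u + q) mod n) = int ((u + q') mod n)" using assms(3) by simp
  then have "(int u + int q) mod int n = (int u + int q') mod int n" by (simp add: of_nat_mod)
  then have "(int u + int q - int u) mod int n = (int u + int q' - int u) mod int n"
    by (rule mod_diff_cong) simp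
  then have "int q mod int n = int q' mod int n" by simp
  then show ?thesis using assms(1,2) by simp
qed

lemma unif_shift:
  fixes n q :: nat
  assumes "q < n"
  shows "map_pmf (\<lambda>u. (u + q) mod n) (pmf_of_set {..<n}) = pmf_of_set {..<n}"
proof -
  have inj: "inj_on (\<lambda>u. (u + q) mod n) {..<n}"
    by (auto simp: inj_on_def add.commute[of _ q] intro: mod_cancel_nat)
  have ne: "{..<n} \<noteq> {}" using assms by (auto simp: lessThan_empty_iff)
  have img: "(\<lambda>u. (u + q) mod n) ` {..<n} = {..<n}"
    by (rule endo_inj_surj) (use assms inj in auto)
  show ?thesis using map_pmf_of_set_inj[OF inj ne] img by simp
qed

lemma shift_pair:
  fixes n :: nat and Q :: "nat pmf"
  assumes "set_pmf Q \<subseteq> {..<n}"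
  shows "map_pmf (\<lambda>(u,q). ((u + q) mod n, q)) (pair_pmf (pmf_of_set {..<n}) Q)
       = pair_pmf (pmf_of_set {..<n}) Q"
proof -
  let ?U = "pmf_of_set {..<n}"
  have P: "pair_pmf ?U Q = bind_pmf Q (\<lambda>q. map_pmf (\<lambda>u. (u, q)) ?U)"
    unfolding pair_pmf_def by (subst bind_commute_pmf) (simp add: map_pmf_def)
  have "map_pmf (\<lambda>(u,q). ((u + q) mod n, q)) (pair_pmf ?U Q)
     = bind_pmf Q (\<lambda>q. map_pmf (\<lambda>u. (u, q)) (map_pmf (\<lambda>u. (u + q) mod n) ?U))"
    unfolding P map_bind_pmf by (simp add: map_pmf_comp)
  also have "\<dots> = bind_pmf Q (\<lambda>q. map_pmf (\<lambda>u. (u, q)) ?U)"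
    by (intro bind_pmf_cong refl) (use assms unif_shift in auto)
  finally show ?thesis using P by simp
qed

lemma H_map_eq:
  assumes "map_pmf f p = map_pmf g p" shows "shannon_entropy (map_pmf f p) = shannon_entropy (map_pmf g p)"
  using assms by simp

lemma piece_UQ:
  fixes n :: nat and Q :: "nat pmf"
  assumes n: "n \<ge> 1" and Qs: "set_pmf Q \<subseteq> {..<n}"
  shows "entropy_vector (map_pmf (\<lambda>(u,q). (u, (u + q) mod n, q)) (pair_pmf (pmf_of_set {..<n}) Q))
     = (log 2 n - shannon_entropy Q) *\<^sub>R e12 + shannon_entropy Q *\<^sub>R e123'"
proof -
  let ?U = "pmf_of_set {..<n}"
  let ?R = "pair_pmf ?U Q"
  let ?b = "shannon_entropy Q"
  have ne: "{..<n} \<noteq> {}" using n by (auto simp: lessThan_empty_iff)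
  have HU: "shannon_entropy ?U = log 2 n" using H_uniform[OF _ ne] by simp
  have fQ: "finite (set_pmf Q)" using Qs finite_subset by blast
  have sU: "set_pmf ?U = {..<n}" using ne by simp
  have HR: "shannon_entropy ?R = log 2 n + ?b"
    using H_pair[of ?U Q] fQ sU HU by simp
  have injR: "shannon_entropy (map_pmf f ?R) = log 2 n + ?b" if "inj_on f ({..<n} \<times> {..<n})" for f
  proof -
    have "inj_on f (set_pmf ?R)" using that Qs sU by (auto intro: inj_on_subset)
    then have "shannon_entropy (map_pmf f ?R) = shannon_entropy ?R" by (rule H_inj)
    with HR show ?thesis by simp
  qed
  have m1: "map_pmf (\<lambda>(x,y,z). x) (map_pmf (\<lambda>(u,q). (u, (u + q) mod n, q)) ?R) = ?U"
  proof -
    have "map_pmf (\<lambda>(x,y,z). x) (map_pmf (\<lambda>(u,q). (u, (u + q) mod n, q)) ?R) = map_pmf fst ?R"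
      unfolding map_pmf_comp by (intro map_pmf_cong) auto
    then show ?thesis unfolding map_fst_pair_pmf .
  qed
  have m2: "map_pmf (\<lambda>(x,y,z). y) (map_pmf (\<lambda>(u,q). (u, (u + q) mod n, q)) ?R) = ?U"
  proof -
    have "map_pmf (\<lambda>(x,y,z). y) (map_pmf (\<lambda>(u,q). (u, (u + q) mod n, q)) ?R)
       = map_pmf fst (map_pmf (\<lambda>(u,q). ((u + q) mod n, q)) ?R)"
      unfolding map_pmf_comp by (intro map_pmf_cong) auto
    then show ?thesis unfolding shift_pair[OF Qs] map_fst_pair_pmf .
  qed
  have m3: "map_pmf (\<lambda>(x,y,z). z) (map_pmf (\<lambda>(u,q). (u, (u + q) mod n, q)) ?R) = Q"
  proof -
    have "map_pmf (\<lambda>(x,y,z). z) (map_pmf (\<lambda>(u,q). (u, (u + q) mod n, q)) ?R) = map_pmf snd ?R"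
      unfolding map_pmf_comp by (intro map_pmf_cong) auto
    then show ?thesis unfolding map_snd_pair_pmf .
  qed
  have i12: "inj_on (\<lambda>(u,q). (u, (u + q) mod n)) ({..<n} \<times> {..<n})"
    by (auto simp: inj_on_def intro: mod_cancel_nat)
  have i13: "inj_on (\<lambda>(u,q::nat). (u, q)) ({..<n} \<times> {..<n})"
    by (auto simp: inj_on_def)
  have i23: "inj_on (\<lambda>(u,q). ((u + q) mod n, q)) ({..<n} \<times> {..<n})"
  proof (rule inj_onI)
    fix x y assume x: "x \<in> {..<n} \<times> {..<n}" and y: "y \<in> {..<n} \<times> {..<n}"
      and e: "(\<lambda>(u,q). ((u + q) mod n, q)) x = (\<lambda>(u,q). ((u + q) mod n, q)) y"
    obtain u q where xd: "x = (u,q)" by (cases x)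
    obtain u' q' where yd: "y = (u',q')" by (cases y)
    from e have "((u + q) mod n, q) = ((u' + q') mod n, q')" unfolding xd yd prod.case .
    then have c: "(u + q) mod n = (u' + q') mod n \<and> q = q'" by (rule iffD1[OF prod.inject])
    from c have qq: "q = q'" by (rule conjunct2)
    from c have m0: "(u + q) mod n = (u' + q') mod n" by (rule conjunct1)
    then have m: "(u + q) mod n = (u' + q) mod n" by (simp only: qq)
    have "u < n" "u' < n" using x y by (simp_all add: xd yd)
    then have "u = u'" using mod_cancel_nat[of u n u' q] m by (simp add: add.commute)
    then show "x = y" using qq by (simp add: xd yd)
  qed
  have i123: "inj_on (\<lambda>(u,q). (u, (u + q) mod n, q)) ({..<n} \<times> {..<n})"
    by (rule inj_onI) (clarsimp split: prod.splits)
  have m12: "map_pmf (\<lambda>(x,y,z). (x,y)) (map_pmf (\<lambda>(u,q). (u, (u + q) mod n, q)) ?R)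
      = map_pmf (\<lambda>(u,q). (u, (u + q) mod n)) ?R"
    unfolding map_pmf_comp by (intro map_pmf_cong) auto
  have m13: "map_pmf (\<lambda>(x,y,z). (x,z)) (map_pmf (\<lambda>(u,q). (u, (u + q) mod n, q)) ?R)
      = map_pmf (\<lambda>(u,q). (u, q)) ?R"
    unfolding map_pmf_comp by (intro map_pmf_cong) auto
  have m23: "map_pmf (\<lambda>(x,y,z). (y,z)) (map_pmf (\<lambda>(u,q). (u, (u + q) mod n, q)) ?R)
      = map_pmf (\<lambda>(u,q). ((u + q) mod n, q)) ?R"
    unfolding map_pmf_comp by (intro map_pmf_cong) auto
  show ?thesis
    unfolding entropy_vector_def m1 m2 m3 m12 m13 m23
    unfolding vec7_eq
    using HU injR[OF i12] injR[OF i13] injR[OF i23] injR[OF i123]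
    by (simp add: e12_def e123'_def algebra_simps)
qed



lemma H_map_inj: "inj f \<Longrightarrow> shannon_entropy (map_pmf f p) = shannon_entropy p"
  by (rule H_inj) (auto intro: inj_on_subset)

lemma piece1: "entropy_vector (map_pmf (\<lambda>x. (x, (), ())) A) = shannon_entropy A *\<^sub>R e1"
proof -
  have i: "inj (\<lambda>x. (x, ()))" "inj (\<lambda>x. (x, (), ()))" by (auto simp: inj_def)
  show ?thesis unfolding entropy_vector_def vec7_eq
    by (simp add: map_pmf_comp e1_def H_map_inj[OF i(1)] H_map_inj[OF i(2)])
qed

lemma piece2: "entropy_vector (map_pmf (\<lambda>x. ((), x, ())) A) = shannon_entropy A *\<^sub>R e2"
proof -
  have i: "inj (\<lambda>x. ((), x))" "inj (\<lambda>x. (x, ()))" "inj (\<lambda>x. ((), x, ()))" by (auto simp: inj_def)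
  show ?thesis unfolding entropy_vector_def vec7_eq
    by (simp add: map_pmf_comp e2_def H_map_inj[OF i(1)] H_map_inj[OF i(2)] H_map_inj[OF i(3)])
qed

lemma piece3: "entropy_vector (map_pmf (\<lambda>x. ((), (), x)) A) = shannon_entropy A *\<^sub>R e3"
proof -
  have i: "inj (\<lambda>x. ((), x))" "inj (\<lambda>x. ((), (), x))" by (auto simp: inj_def)
  show ?thesis unfolding entropy_vector_def vec7_eq
    by (simp add: map_pmf_comp e3_def H_map_inj[OF i(1)] H_map_inj[OF i(2)])
qed

lemma piece4: "entropy_vector (map_pmf (\<lambda>x. (x, x, ())) A) = shannon_entropy A *\<^sub>R e12"
proof -
  have i: "inj (\<lambda>x. (x, x))" "inj (\<lambda>x. (x, ()))" "inj (\<lambda>x. (x, x, ()))" by (auto simp: inj_def)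
  show ?thesis unfolding entropy_vector_def vec7_eq
    by (simp add: map_pmf_comp e12_def H_map_inj[OF i(1)] H_map_inj[OF i(2)] H_map_inj[OF i(3)])
qed

definition rearr :: "('a \<times> 'b \<times> 'c) \<times> ('d \<times> 'e \<times> 'f) \<Rightarrow> ('a \<times> 'd) \<times> ('b \<times> 'e) \<times> ('c \<times> 'f)" where
  "rearr = (\<lambda>((x1,x2,x3),(y1,y2,y3)). ((x1,y1),(x2,y2),(x3,y3)))"

definition comb :: "('a \<times> 'b \<times> 'c) pmf \<Rightarrow> ('d \<times> 'e \<times> 'f) pmf \<Rightarrow> (('a \<times> 'd) \<times> ('b \<times> 'e) \<times> ('c \<times> 'f)) pmf" where
  "comb p q = map_pmf rearr (pair_pmf p q)"

lemma finite_comb: "finite (set_pmf p) \<Longrightarrow> finite (set_pmf q) \<Longrightarrow> finite (set_pmf (comb p q))"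
  unfolding comb_def by simp

lemma H_comb_marg:
  assumes fp: "finite (set_pmf p)" and fq: "finite (set_pmf q)" and inj: "inj \<sigma>"
    and m: "\<And>x y. m (rearr (x, y)) = \<sigma> (g x, h y)"
  shows "shannon_entropy (map_pmf m (comb p q)) = shannon_entropy (map_pmf g p) + shannon_entropy (map_pmf h q)"
proof -
  have "map_pmf m (comb p q) = map_pmf \<sigma> (map_pmf (\<lambda>(x, y). (g x, h y)) (pair_pmf p q))"
    unfolding comb_def map_pmf_comp by (intro map_pmf_cong) (auto simp: m)
  also have "\<dots> = map_pmf \<sigma> (pair_pmf (map_pmf g p) (map_pmf h q))" by (simp add: map_pair)
  finally have "shannon_entropy (map_pmf m (comb p q)) = shannon_entropy (pair_pmf (map_pmf g p) (map_pmf h q))"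
    using H_map_inj[OF inj] by simp
  also have "\<dots> = shannon_entropy (map_pmf g p) + shannon_entropy (map_pmf h q)"
    by (rule H_pair) (use fp fq in auto)
  finally show ?thesis .
qed

lemma ev_comb:
  assumes fp: "finite (set_pmf p)" and fq: "finite (set_pmf q)"
  shows "entropy_vector (comb p q) = entropy_vector p + entropy_vector q"
proof -
  have isw: "inj (\<lambda>((a,b),(c,d)). ((a,c),(b,d)))" by (auto simp: inj_def)
  have i7: "inj rearr" by (auto simp: inj_def rearr_def)
  have c1: "shannon_entropy (map_pmf (\<lambda>(x,y,z). x) (comb p q)) =
     shannon_entropy (map_pmf (\<lambda>(x,y,z). x) p) + shannon_entropy (map_pmf (\<lambda>(x,y,z). x) q)"
    by (rule H_comb_marg[OF fp fq inj_on_id[of UNIV, unfolded id_def]]) (auto simp: rearr_def)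
  have c2: "shannon_entropy (map_pmf (\<lambda>(x,y,z). y) (comb p q)) =
     shannon_entropy (map_pmf (\<lambda>(x,y,z). y) p) + shannon_entropy (map_pmf (\<lambda>(x,y,z). y) q)"
    by (rule H_comb_marg[OF fp fq inj_on_id[of UNIV, unfolded id_def]]) (auto simp: rearr_def)
  have c3: "shannon_entropy (map_pmf (\<lambda>(x,y,z). z) (comb p q)) =
     shannon_entropy (map_pmf (\<lambda>(x,y,z). z) p) + shannon_entropy (map_pmf (\<lambda>(x,y,z). z) q)"
    by (rule H_comb_marg[OF fp fq inj_on_id[of UNIV, unfolded id_def]]) (auto simp: rearr_def)
  have c4: "shannon_entropy (map_pmf (\<lambda>(x,y,z). (x,y)) (comb p q)) =
     shannon_entropy (map_pmf (\<lambda>(x,y,z). (x,y)) p) + shannon_entropy (map_pmf (\<lambda>(x,y,z). (x,y)) q)"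
    by (rule H_comb_marg[OF fp fq isw]) (auto simp: rearr_def)
  have c5: "shannon_entropy (map_pmf (\<lambda>(x,y,z). (x,z)) (comb p q)) =
     shannon_entropy (map_pmf (\<lambda>(x,y,z). (x,z)) p) + shannon_entropy (map_pmf (\<lambda>(x,y,z). (x,z)) q)"
    by (rule H_comb_marg[OF fp fq isw]) (auto simp: rearr_def)
  have c6: "shannon_entropy (map_pmf (\<lambda>(x,y,z). (y,z)) (comb p q)) =
     shannon_entropy (map_pmf (\<lambda>(x,y,z). (y,z)) p) + shannon_entropy (map_pmf (\<lambda>(x,y,z). (y,z)) q)"
    by (rule H_comb_marg[OF fp fq isw]) (auto simp: rearr_def)
  have c7: "shannon_entropy (map_pmf (\<lambda>x. x) (comb p q)) =
     shannon_entropy (map_pmf (\<lambda>x. x) p) + shannon_entropy (map_pmf (\<lambda>x. x) q)"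
    by (rule H_comb_marg[OF fp fq i7]) (auto simp: rearr_def)
  show ?thesis
    unfolding entropy_vector_def vec7_eq using c1 c2 c3 c4 c5 c6 c7 by simp
qed

lemma H_map_map:
  assumes "inj \<tau>" "\<And>x. mm (f x) = \<tau> (m x)"
  shows "shannon_entropy (map_pmf mm (map_pmf f p)) = shannon_entropy (map_pmf m p)"
proof -
  have "map_pmf mm (map_pmf f p) = map_pmf \<tau> (map_pmf m p)"
    unfolding map_pmf_comp using assms(2) by simp
  then show ?thesis using H_map_inj[OF assms(1)] by simp
qed

lemma ev_gamma:
  fixes p :: "('a::countable \<times> 'b::countable \<times> 'c::countable) pmf"
  assumes fp: "finite (set_pmf p)"
  shows "entropy_vector p \<in> Gamma3_star"
proof -
  define f where "f = (\<lambda>(x::'a,y::'b,z::'c). (to_nat x, to_nat y, to_nat z))"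
  have t1: "inj (to_nat :: 'a \<Rightarrow> nat)" "inj (to_nat :: 'b \<Rightarrow> nat)" "inj (to_nat :: 'c \<Rightarrow> nat)"
    by (auto simp: inj_def)
  have t2: "inj (\<lambda>(a::'a, b::'b). (to_nat a, to_nat b))" "inj (\<lambda>(a::'a, b::'c). (to_nat a, to_nat b))"
    "inj (\<lambda>(a::'b, b::'c). (to_nat a, to_nat b))" "inj f"
    by (auto simp: inj_def f_def)
  have "entropy_vector (map_pmf f p) = entropy_vector p"
    unfolding entropy_vector_def
    apply (subst H_map_map[where mm="\<lambda>(x,y,z). x" and m="\<lambda>(x,y,z). x", OF t1(1)], simp add: f_def split_beta)
    apply (subst H_map_map[where mm="\<lambda>(x,y,z). y" and m="\<lambda>(x,y,z). y", OF t1(2)], simp add: f_def split_beta)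
    apply (subst H_map_map[where mm="\<lambda>(x,y,z). z" and m="\<lambda>(x,y,z). z", OF t1(3)], simp add: f_def split_beta)
    apply (subst H_map_map[where mm="\<lambda>(x,y,z). (x,y)" and m="\<lambda>(x,y,z). (x,y)", OF t2(1)], simp add: f_def split_beta)
    apply (subst H_map_map[where mm="\<lambda>(x,y,z). (x,z)" and m="\<lambda>(x,y,z). (x,z)", OF t2(2)], simp add: f_def split_beta)
    apply (subst H_map_map[where mm="\<lambda>(x,y,z). (y,z)" and m="\<lambda>(x,y,z). (y,z)", OF t2(3)], simp add: f_def split_beta)
    apply (subst H_map_inj[OF t2(4)])
    apply (rule refl)
    done
  moreover have "finite (set_pmf (map_pmf f p))" using fp by simp
  moreover have "map_pmf f p \<in> {p :: (nat \<times> nat \<times> nat) pmf. True}" by simp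
  ultimately show ?thesis unfolding Gamma3_star_def by (metis (mono_tags, lifting) mem_Collect_eq)
qed



lemma powr_ceil:
  assumes "0 \<le> (t::real)"
  shows "1 \<le> nat \<lceil>2 powr t\<rceil> \<and> t \<le> log 2 (real (nat \<lceil>2 powr t\<rceil>))"
proof -
  have g1: "1 \<le> 2 powr t" using ge_one_powr_ge_zero[of 2 t] assms by simp
  then have c1: "1 \<le> \<lceil>2 powr t\<rceil>" by linarith
  have r: "real (nat \<lceil>2 powr t\<rceil>) = real_of_int \<lceil>2 powr t\<rceil>" using c1 by simp
  have "2 powr t \<le> real (nat \<lceil>2 powr t\<rceil>)" unfolding r by (rule le_of_int_ceiling)
  then have "log 2 (2 powr t) \<le> log 2 (real (nat \<lceil>2 powr t\<rceil>))"
    using g1 by (subst log_le_cancel_iff) auto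
  moreover have "1 \<le> nat \<lceil>2 powr t\<rceil>" using nat_mono[OF c1] by simp
  ultimately show ?thesis by simp
qed

lemma H_exists_fin:
  assumes "0 \<le> t"
  shows "\<exists>p::nat pmf. finite (set_pmf p) \<and> shannon_entropy p = t"
proof -
  obtain p :: "nat pmf" where "set_pmf p \<subseteq> {..<nat \<lceil>2 powr t\<rceil>}" "shannon_entropy p = t"
    using H_exists[of "nat \<lceil>2 powr t\<rceil>" t] powr_ceil[OF assms] assms by blast
  then show ?thesis using finite_subset by blast
qed

theorem corollary2:
  shows "Omega_in \<subseteq> Omega \<inter> Gamma3_star"
proof
  fix v assume "v \<in> Omega_in"
  then obtain l1 l2 l3 l12 l123 where
    v: "v = l1 *\<^sub>R e1 + l2 *\<^sub>R e2 + l3 *\<^sub>R e3 + l12 *\<^sub>R e12 + l123 *\<^sub>R e123'" and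
    nn: "l1 \<ge> 0" "l2 \<ge> 0" "l3 \<ge> 0" "l12 \<ge> 0" "l123 \<ge> 0" and
    cond: "l12 + l123 \<ge> log 2 (real_of_int \<lceil>2 powr l123\<rceil>) \<or> (\<exists>m::nat. m \<ge> 1 \<and> l123 = log 2 (real m))"
    unfolding Omega_in_def by blast
  have "v \<in> Omega" using v nn unfolding Omega_def by blast
  moreover have "v \<in> Gamma3_star"
  proof -
    define n where "n = nat \<lceil>2 powr l123\<rceil>"
    have n1: "n \<ge> 1" and Ln: "l123 \<le> log 2 n" using powr_ceil[OF nn(5)] by (auto simp: n_def)
    have rn: "real n = real_of_int \<lceil>2 powr l123\<rceil>" using n1 by (simp add: n_def)
    have cond': "log 2 n \<le> l12 + l123"
      using cond
    proof
      assume "l12 + l123 \<ge> log 2 (real_of_int \<lceil>2 powr l123\<rceil>)"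
      then show ?thesis using rn by simp
    next
      assume "\<exists>m::nat. m \<ge> 1 \<and> l123 = log 2 (real m)"
      then obtain m :: nat where m: "m \<ge> 1" "l123 = log 2 (real m)" by blast
      then have "2 powr l123 = real m" by simp
      then have "real n = real m" using rn by simp
      then show ?thesis using m nn by simp
    qed
    define a where "a = l12 - (log 2 n - l123)"
    have a0: "a \<ge> 0" using cond' by (simp add: a_def)
    obtain Q :: "nat pmf" where Qs: "set_pmf Q \<subseteq> {..<n}" and HQ: "shannon_entropy Q = l123"
      using H_exists[OF n1 nn(5) Ln] by blast
    obtain A :: "nat pmf" where fA: "finite (set_pmf A)" and HA: "shannon_entropy A = l1"
      using H_exists_fin[OF nn(1)] by blast
    obtain B :: "nat pmf" where fB: "finite (set_pmf B)" and HB: "shannon_entropy B = l2"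
      using H_exists_fin[OF nn(2)] by blast
    obtain C :: "nat pmf" where fC: "finite (set_pmf C)" and HC: "shannon_entropy C = l3"
      using H_exists_fin[OF nn(3)] by blast
    obtain W :: "nat pmf" where fW: "finite (set_pmf W)" and HW: "shannon_entropy W = a"
      using H_exists_fin[OF a0] by blast
    define p1 where "p1 = map_pmf (\<lambda>x. (x, (), ())) A"
    define p2 where "p2 = map_pmf (\<lambda>x. ((), x, ())) B"
    define p3 where "p3 = map_pmf (\<lambda>x. ((), (), x)) C"
    define p4 where "p4 = map_pmf (\<lambda>x. (x, x, ())) W"
    define p5 where "p5 = map_pmf (\<lambda>(u,q). (u, (u + q) mod n, q)) (pair_pmf (pmf_of_set {..<n}) Q)"
    have ne: "{..<n} \<noteq> {}" using n1 by (auto simp: lessThan_empty_iff)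
    have fQ: "finite (set_pmf Q)" using Qs finite_subset by blast
    have f1: "finite (set_pmf p1)" using fA by (simp add: p1_def)
    have f2: "finite (set_pmf p2)" using fB by (simp add: p2_def)
    have f3: "finite (set_pmf p3)" using fC by (simp add: p3_def)
    have f4: "finite (set_pmf p4)" using fW by (simp add: p4_def)
    have f5: "finite (set_pmf p5)" using fQ ne by (simp add: p5_def)
    define P where "P = comb (comb (comb (comb p1 p2) p3) p4) p5"
    have f12: "finite (set_pmf (comb p1 p2))" using f1 f2 by (rule finite_comb)
    have f123: "finite (set_pmf (comb (comb p1 p2) p3))" using f12 f3 by (rule finite_comb)
    have f1234: "finite (set_pmf (comb (comb (comb p1 p2) p3) p4))" using f123 f4 by (rule finite_comb)
    have fP: "finite (set_pmf P)" unfolding P_def using f1234 f5 by (rule finite_comb)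
    have "entropy_vector P = entropy_vector p1 + entropy_vector p2 + entropy_vector p3
        + entropy_vector p4 + entropy_vector p5"
      unfolding P_def using f1 f2 f3 f4 f5 f12 f123 f1234 by (simp add: ev_comb)
    also have "\<dots> = l1 *\<^sub>R e1 + l2 *\<^sub>R e2 + l3 *\<^sub>R e3 + a *\<^sub>R e12
        + ((log 2 n - l123) *\<^sub>R e12 + l123 *\<^sub>R e123')"
      unfolding p1_def p2_def p3_def p4_def p5_def piece1 piece2 piece3 piece4 piece_UQ[OF n1 Qs]
      using HA HB HC HW HQ by simp
    also have "\<dots> = v" unfolding v a_def by (simp add: algebra_simps)
    finally show ?thesis using ev_gamma[OF fP] by simp
  qed
  ultimately show "v \<in> Omega \<inter> Gamma3_star" by blast
qed


end
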